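(* Consider the Graph Variance Allocation problem with $m=n$ and $S_j=\{j,j+1\}$ for every $j\in[n]$ (indices modulo $n$, so $S_n=\{n,1\}$), where all variables have the same mean $\mu$. Then the allocation $\sigma_i^2=\frac1n$ for every $i\in[n]$ is an optimal solution.
   Context: Graph Variance Allocation problem: choose $\sigma_1,\dots,\sigma_n\ge0$ with $\sum_i\sigma_i^2=1$, with $X_i\sim\mathcal N(\mu_i,\sigma_i^2)$ independent, to maximize $\mathbb{E}\sum_{j=1}^m\max_{i\in S_j}X_i$. *)

theory Defs
  imports "HOL-Probability.Probability"
begin

definition gauss :: "real \<Rightarrow> real \<Rightarrow> real measure" where
  "gauss mu s = (if s = 0 then return borel mu else density lborel (normal_density mu s))"

text \<open>Variables indexed 0..n-1, sets S 0 .. S (m-1) (nonempty subsets of 0..n-1), means mu,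
  standard deviations sd.  Objective: E sum_j max_{i in S_j} X_i, with X_i independent,
  i.e. the integral against the product of the marginal laws.\<close>
definition gva_objective ::
  "nat \<Rightarrow> nat \<Rightarrow> (nat \<Rightarrow> nat set) \<Rightarrow> (nat \<Rightarrow> real) \<Rightarrow> (nat \<Rightarrow> real) \<Rightarrow> real" where
  "gva_objective n m S mu sd =
     (\<integral>x. (\<Sum>j<m. Max (x ` S j)) \<partial>(PiM {..<n} (\<lambda>i. gauss (mu i) (sd i))))"

definition gva_feasible :: "nat \<Rightarrow> (nat \<Rightarrow> real) \<Rightarrow> bool" where
  "gva_feasible n sd \<longleftrightarrow> (\<forall>i<n. sd i \<ge> 0) \<and> (\<Sum>i<n. (sd i)\<^sup>2) = 1"

end

theory Submission
  imports Defs
begin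

lemma sets_gauss[simp]: "sets (gauss mu s) = sets borel"
  by (simp add: gauss_def)

lemma space_gauss[simp]: "space (gauss mu s) = UNIV"
  by (simp add: gauss_def)

lemma gauss_prob: "0 \<le> s \<Longrightarrow> prob_space (gauss mu s)"
  unfolding gauss_def by (auto intro: prob_space_return prob_space_normal_density)

lemma integrable_return_real:
  fixes g :: "real \<Rightarrow> real"
  assumes "g \<in> borel_measurable borel"
  shows "integrable (return borel x) g"
  using assms by (simp add: integrable_iff_bounded nn_integral_return)

lemma gauss_mean:
  assumes "0 \<le> s"
  shows "integrable (gauss mu s) (\<lambda>y. y) \<and> integral\<^sup>L (gauss mu s) (\<lambda>y. y) = mu"
proof (cases "s = 0")
  case True
  then show ?thesis by (simp add: gauss_def integrable_return_real integral_return)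
next
  case False
  then have sp: "0 < s" using assms by simp
  have "integrable lborel (\<lambda>x. normal_density mu s x * x)"
    using integrable_normal_moment_nz_1[OF sp] .
  moreover have "integral\<^sup>L lborel (\<lambda>x. normal_density mu s x * x) = mu"
    using integral_normal_moment_nz_1[OF sp] .
  ultimately show ?thesis using False
    by (simp add: gauss_def integrable_density integral_density)
qed

lemma gauss_absdev:
  assumes "0 \<le> s"
  shows "integrable (gauss mu s) (\<lambda>y. \<bar>y - mu\<bar>) \<and>
         integral\<^sup>L (gauss mu s) (\<lambda>y. \<bar>y - mu\<bar>) = s * sqrt (2 / pi)"
proof (cases "s = 0")
  case True
  then show ?thesis by (simp add: gauss_def integrable_return_real integral_return)
next
  case False
  then have sp: "0 < s" using assms by simp
  have "integrable lborel (\<lambda>x. normal_density mu s x * \<bar>x - mu\<bar> ^ 1)"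
    using integrable_normal_moment_abs[OF sp] .
  moreover have "integral\<^sup>L lborel (\<lambda>x. normal_density mu s x * \<bar>x - mu\<bar> ^ (2 * 0 + 1)) = 2 ^ 0 * s ^ (2 * 0 + 1) * fact 0 * sqrt (2 / pi)"
    using integral_normal_moment_abs_odd[OF sp] .
  ultimately show ?thesis using False
    by (simp add: gauss_def integrable_density integral_density)
qed


locale gvaP =
  fixes n :: nat and mu :: real and sd :: "nat \<Rightarrow> real"
  assumes sd_nn: "\<And>i. i < n \<Longrightarrow> 0 \<le> sd i"
begin

abbreviation P where "P \<equiv> PiM {..<n} (\<lambda>i. gauss mu (sd i))"

lemma P_prob: "prob_space P"
  by (rule prob_space_PiM) (auto intro: gauss_prob sd_nn)

lemma comp_meas: "i < n \<Longrightarrow> (\<lambda>x. x i) \<in> measurable P borel"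
proof -
  assume "i < n"
  then have "(\<lambda>x. x i) \<in> measurable P (gauss mu (sd i))"
    by (intro measurable_component_singleton) auto
  then show ?thesis by (simp add: measurable_cong_sets[OF refl sets_gauss[of mu "sd i"]])
qed

lemma comp_distr: "i < n \<Longrightarrow> distr P (gauss mu (sd i)) (\<lambda>x. x i) = gauss mu (sd i)"
  by (rule distr_PiM_component) (auto intro: gauss_prob sd_nn)

lemma comp_integral:
  fixes g :: "real \<Rightarrow> real"
  assumes i: "i < n" and g: "g \<in> borel_measurable borel"
  shows "(integrable P (\<lambda>x. g (x i)) \<longleftrightarrow> integrable (gauss mu (sd i)) g) \<and>
         (\<integral>x. g (x i) \<partial>P) = integral\<^sup>L (gauss mu (sd i)) g"
proof -
  have m: "(\<lambda>x. x i) \<in> measurable P (gauss mu (sd i))"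
    using i by (intro measurable_component_singleton) auto
  have g': "g \<in> borel_measurable (gauss mu (sd i))"
    using g by (simp add: measurable_cong_sets[OF sets_gauss[of mu "sd i"] refl])
  show ?thesis
    using integrable_distr_eq[OF m g'] integral_distr[OF m g'] comp_distr[OF i] by simp
qed

lemma comp_mean: "i < n \<Longrightarrow> integrable P (\<lambda>x. x i) \<and> (\<integral>x. x i \<partial>P) = mu"
  using comp_integral[of i "\<lambda>y. y"] gauss_mean[OF sd_nn, of i mu] by simp

lemma comp_absdev: "i < n \<Longrightarrow> integrable P (\<lambda>x. \<bar>x i - mu\<bar>) \<and> (\<integral>x. \<bar>x i - mu\<bar> \<partial>P) = sd i * sqrt (2 / pi)"
  using comp_integral[of i "\<lambda>y. \<bar>y - mu\<bar>"] gauss_absdev[OF sd_nn, of i mu] by simp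

lemma indep_all: "n \<ge> 1 \<Longrightarrow> prob_space.indep_vars P (\<lambda>_. borel) (\<lambda>i x. x i) {..<n}"
proof -
  assume n: "n \<ge> 1"
  interpret prob_space P by (rule P_prob)
  have "0 \<in> {..<n}" using n by simp
  then have ne: "{..<n} \<noteq> {}" by blast
  have "distr P (\<Pi>\<^sub>M i\<in>{..<n}. borel) (\<lambda>x. \<lambda>i\<in>{..<n}. x i) = P"
  proof -
    have "distr P (\<Pi>\<^sub>M i\<in>{..<n}. borel) (\<lambda>x. \<lambda>i\<in>{..<n}. x i) = distr P P (\<lambda>x. x)"
      by (rule distr_cong) (auto simp: space_PiM PiE_def extensional_def intro!: sets_PiM_cong)
    also have "\<dots> = P" by (rule distr_id2) simp
    finally show ?thesis .
  qed
  moreover have "(\<Pi>\<^sub>M i\<in>{..<n}. distr P borel (\<lambda>x. x i)) = P"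
  proof (rule PiM_cong)
    fix i assume "i \<in> {..<n}"
    then have "distr P borel (\<lambda>x. x i) = distr P (gauss mu (sd i)) (\<lambda>x. x i)"
      by (intro distr_cong) auto
    then show "distr P borel (\<lambda>x. x i) = gauss mu (sd i)" using comp_distr \<open>i \<in> {..<n}\<close> by simp
  qed simp
  ultimately show ?thesis
    using indep_vars_iff_distr_eq_PiM'[OF ne, where M'="\<lambda>_. borel" and X="\<lambda>i x. x i"] comp_meas by auto
qed

lemma pair_indep:
  assumes j: "j < n" and k: "k < n" and jk: "j \<noteq> k"
  shows "prob_space.indep_var P borel (\<lambda>x. x j) borel (\<lambda>x. x k)"
proof -
  interpret prob_space P by (rule P_prob)
  have "indep_vars (\<lambda>_. borel) (\<lambda>i x. x i) (insert j {k})"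
    by (rule indep_vars_subset[OF indep_all]) (use j k in auto)
  from indep_vars_sum[OF _ _ this] jk
  have "indep_var borel (\<lambda>x. x j) borel (\<lambda>\<omega>. \<Sum>i\<in>{k}. \<omega> i)" by simp
  then show ?thesis by simp
qed

lemma comp_distributed:
  assumes i: "i < n" and pos: "0 < sd i"
  shows "distributed P lborel (\<lambda>x. x i) (normal_density mu (sd i))"
proof -
  have m: "(\<lambda>x. x i) \<in> measurable P lborel"
    using comp_meas[OF i] by (simp add: measurable_cong_sets[OF refl sets_lborel])
  have "distr P lborel (\<lambda>x. x i) = distr P (gauss mu (sd i)) (\<lambda>x. x i)"
    by (rule distr_cong) auto
  also have "\<dots> = gauss mu (sd i)" by (rule comp_distr[OF i])
  also have "\<dots> = density lborel (normal_density mu (sd i))"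
    using pos by (simp add: gauss_def)
  finally show ?thesis unfolding distributed_def using m by simp
qed

lemma ae_const:
  assumes i: "i < n" and z: "sd i = 0"
  shows "AE x in P. x i = mu"
proof -
  have pm: "Measurable.pred borel (\<lambda>y::real. y = mu)" by measurable
  have g: "gauss mu (sd i) = return borel mu" using z by (simp add: gauss_def)
  have "AE y in gauss mu (sd i). y = mu"
    unfolding g by (rule AE_return[THEN iffD2, OF _ pm]) simp_all
  then show ?thesis
    by (intro AE_PiM_component[of "{..<n}" "\<lambda>i. gauss mu (sd i)" i "\<lambda>y. y = mu"])
       (use i in \<open>auto intro: gauss_prob sd_nn\<close>)
qed

lemma pair_absdiff:
  assumes j: "j < n" and k: "k < n" and jk: "j \<noteq> k"
  shows "integrable P (\<lambda>x. \<bar>x j - x k\<bar>) \<and>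
         (\<integral>x. \<bar>x j - x k\<bar> \<partial>P) = sqrt (2 / pi) * sqrt ((sd j)\<^sup>2 + (sd k)\<^sup>2)"
proof -
  have [measurable]: "(\<lambda>x. x j) \<in> borel_measurable P" "(\<lambda>x. x k) \<in> borel_measurable P"
    using comp_meas j k by auto
  have ij: "integrable P (\<lambda>x. x j)" "integrable P (\<lambda>x. x k)"
    using comp_mean j k by auto
  have int: "integrable P (\<lambda>x. \<bar>x j - x k\<bar>)"
    using ij by (intro integrable_abs Bochner_Integration.integrable_diff)
  have nnj: "0 \<le> sd j" and nnk: "0 \<le> sd k" using sd_nn j k by auto
  have val: "(\<integral>x. \<bar>x j - x k\<bar> \<partial>P) = sqrt (2 / pi) * sqrt ((sd j)\<^sup>2 + (sd k)\<^sup>2)"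
  proof (cases "sd j = 0")
    case True
    have "(\<integral>x. \<bar>x j - x k\<bar> \<partial>P) = (\<integral>x. \<bar>x k - mu\<bar> \<partial>P)"
      by (rule integral_cong_AE) (use ae_const[OF j True] in \<open>auto\<close>)
    also have "\<dots> = sd k * sqrt (2 / pi)" using comp_absdev k by auto
    finally show ?thesis using True nnk by simp
  next
    case Fj: False
    show ?thesis
    proof (cases "sd k = 0")
      case True
      have "(\<integral>x. \<bar>x j - x k\<bar> \<partial>P) = (\<integral>x. \<bar>x j - mu\<bar> \<partial>P)"
        by (rule integral_cong_AE) (use ae_const[OF k True] in \<open>auto\<close>)
      also have "\<dots> = sd j * sqrt (2 / pi)" using comp_absdev j by auto
      finally show ?thesis using True nnj by simp
    next
      case False
      interpret prob_space P by (rule P_prob)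
      have pj: "0 < sd j" and pk: "0 < sd k" using Fj False nnj nnk by auto
      define s where "s = sqrt ((sd j)\<^sup>2 + (sd k)\<^sup>2)"
      have sp: "0 < s" unfolding s_def using pj by (simp add: add_pos_nonneg)
      have d: "distributed P lborel (\<lambda>x. x j - x k) (normal_density (mu - mu) s)"
        unfolding s_def
        by (rule diff_indep_normal[OF pair_indep[OF j k jk] pj pk comp_distributed[OF j pj] comp_distributed[OF k pk]])
      have "(\<integral>y. normal_density (mu - mu) s y * \<bar>y\<bar> \<partial>lborel) = (\<integral>x. \<bar>x j - x k\<bar> \<partial>P)"
        by (rule distributed_integral[OF d]) auto
      moreover have "(\<integral>y. normal_density 0 s y * \<bar>y - 0\<bar> ^ (2 * 0 + 1) \<partial>lborel) = 2 ^ 0 * s ^ (2 * 0 + 1) * fact 0 * sqrt (2 / pi)"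
        by (rule integral_normal_moment_abs_odd[OF sp])
      ultimately show ?thesis unfolding s_def[symmetric] by simp
    qed
  qed
  show ?thesis using int val by simp
qed

lemma max_pair:
  assumes j: "j < n" and k: "k < n"
  shows "integrable P (\<lambda>x. Max {x j, x k}) \<and>
         (\<integral>x. Max {x j, x k} \<partial>P) = mu + (if j = k then 0 else sqrt (2 / pi) / 2 * sqrt ((sd j)\<^sup>2 + (sd k)\<^sup>2))"
proof (cases "j = k")
  case True
  then show ?thesis using comp_mean[OF j] by simp
next
  case False
  have eq: "(\<lambda>x::nat\<Rightarrow>real. Max {x j, x k}) = (\<lambda>x. (x j + x k + \<bar>x j - x k\<bar>) / 2)"
    by (auto simp: fun_eq_iff max_def)
  have ij: "integrable P (\<lambda>x. x j)" "integrable P (\<lambda>x. x k)"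
    using comp_mean j k by auto
  have ia: "integrable P (\<lambda>x. \<bar>x j - x k\<bar>)" using pair_absdiff[OF j k False] by simp
  have int: "integrable P (\<lambda>x. (x j + x k + \<bar>x j - x k\<bar>) / 2)"
    using ij ia by (intro integrable_divide Bochner_Integration.integrable_add)
  have "(\<integral>x. (x j + x k + \<bar>x j - x k\<bar>) / 2 \<partial>P) = ((\<integral>x. x j \<partial>P) + (\<integral>x. x k \<partial>P) + (\<integral>x. \<bar>x j - x k\<bar> \<partial>P)) / 2"
    using ij ia by (simp add: Bochner_Integration.integral_add)
  also have "\<dots> = mu + sqrt (2 / pi) / 2 * sqrt ((sd j)\<^sup>2 + (sd k)\<^sup>2)"
    using comp_mean[OF j] comp_mean[OF k] pair_absdiff[OF j k False] by simp
  finally show ?thesis using eq int False by simp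
qed

lemma objective:
  assumes n: "n \<ge> 1"
  shows "gva_objective n n (\<lambda>j. {j, Suc j mod n}) (\<lambda>_. mu) sd =
    (\<Sum>j<n. mu + (if j = Suc j mod n then 0 else sqrt (2 / pi) / 2 * sqrt ((sd j)\<^sup>2 + (sd (Suc j mod n))\<^sup>2)))"
proof -
  have lt: "Suc j mod n < n" for j using n by simp
  have "gva_objective n n (\<lambda>j. {j, Suc j mod n}) (\<lambda>_. mu) sd =
        (\<integral>x. (\<Sum>j<n. Max {x j, x (Suc j mod n)}) \<partial>P)"
    unfolding gva_objective_def by simp
  also have "\<dots> = (\<Sum>j<n. \<integral>x. Max {x j, x (Suc j mod n)} \<partial>P)"
    by (rule Bochner_Integration.integral_sum) (use max_pair lt in auto)
  also have "\<dots> = (\<Sum>j<n. mu + (if j = Suc j mod n then 0 else sqrt (2 / pi) / 2 * sqrt ((sd j)\<^sup>2 + (sd (Suc j mod n))\<^sup>2)))"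
    by (rule sum.cong) (use max_pair lt in auto)
  finally show ?thesis .
qed

end

lemma sum_shift_mod:
  fixes f :: "nat \<Rightarrow> real"
  assumes "n \<ge> 1"
  shows "(\<Sum>j<n. f (Suc j mod n)) = (\<Sum>j<n. f j)"
proof -
  obtain m where m: "n = Suc m" using assms by (cases n) auto
  have "(\<Sum>j<Suc m. f (Suc j mod Suc m)) = (\<Sum>j<m. f (Suc j mod Suc m)) + f 0"
    by (simp add: sum.lessThan_Suc)
  also have "(\<Sum>j<m. f (Suc j mod Suc m)) = (\<Sum>j<m. f (Suc j))"
    by (rule sum.cong) auto
  also have "(\<Sum>j<m. f (Suc j)) + f 0 = (\<Sum>j<Suc m. f j)"
    by (subst sum.lessThan_Suc_shift) (simp add: add.commute)
  finally show ?thesis using m by simp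
qed

theorem theorem7:
  fixes n :: nat and mu :: real
  assumes "n \<ge> 1"
  shows "gva_feasible n (\<lambda>i. sqrt (1 / real n)) \<and>
    (\<forall>sd. gva_feasible n sd \<longrightarrow>
       gva_objective n n (\<lambda>j. {j, Suc j mod n}) (\<lambda>_. mu) sd
       \<le> gva_objective n n (\<lambda>j. {j, Suc j mod n}) (\<lambda>_. mu) (\<lambda>i. sqrt (1 / real n)))"
proof -
  have n0: "real n > 0" using assms by simp
  have sq: "(sqrt (1 / real n))\<^sup>2 = 1 / real n" using n0 by simp
  have feas: "gva_feasible n (\<lambda>i. sqrt (1 / real n))"
    unfolding gva_feasible_def using n0 sq by simp
  have main: "gva_objective n n (\<lambda>j. {j, Suc j mod n}) (\<lambda>_. mu) sd
       \<le> gva_objective n n (\<lambda>j. {j, Suc j mod n}) (\<lambda>_. mu) (\<lambda>i. sqrt (1 / real n))"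
    if f: "gva_feasible n sd" for sd
  proof -
    have nn: "\<And>i. i < n \<Longrightarrow> 0 \<le> sd i" and s1: "(\<Sum>i<n. (sd i)\<^sup>2) = 1"
      using f unfolding gva_feasible_def by auto
    interpret A: gvaP n mu sd by unfold_locales (rule nn)
    interpret B: gvaP n mu "\<lambda>i. sqrt (1 / real n)" by unfold_locales simp
    define c where "c = sqrt (2 / pi) / 2"
    have c0: "c \<ge> 0" unfolding c_def by simp
    show ?thesis
    proof (cases "n = 1")
      case True
      then show ?thesis using A.objective[OF assms] B.objective[OF assms] by simp
    next
      case False
      then have n2: "n \<ge> 2" using assms by simp
      have ne: "j \<noteq> Suc j mod n" if "j < n" for j
      proof (cases "Suc j < n")
        case True then show ?thesis by simp
      next
        case False
        then have "Suc j = n" using that by simp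
        then show ?thesis using n2 by auto
      qed
      define a where "a j = (sd j)\<^sup>2 + (sd (Suc j mod n))\<^sup>2" for j
      have a0: "a j \<ge> 0" for j unfolding a_def by simp
      have LHS: "gva_objective n n (\<lambda>j. {j, Suc j mod n}) (\<lambda>_. mu) sd = real n * mu + c * (\<Sum>j<n. sqrt (a j))"
        using A.objective[OF assms] ne by (simp add: c_def a_def sum.distrib sum_distrib_left)
      have RHS: "gva_objective n n (\<lambda>j. {j, Suc j mod n}) (\<lambda>_. mu) (\<lambda>i. sqrt (1 / real n)) = real n * mu + c * (real n * sqrt (2 / real n))"
        using B.objective[OF assms] ne sq by (simp add: c_def sum.distrib algebra_simps)
      have suma: "(\<Sum>j<n. a j) = 2"
        unfolding a_def using s1 sum_shift_mod[OF assms, of "\<lambda>i. (sd i)\<^sup>2"] by (simp add: sum.distrib)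
      have "(\<Sum>j<n. 1 * sqrt (a j))\<^sup>2 \<le> (\<Sum>j<n. (1::real)\<^sup>2) * (\<Sum>j<n. (sqrt (a j))\<^sup>2)"
        by (rule Cauchy_Schwarz_ineq_sum)
      also have "\<dots> = real n * 2" using a0 suma by simp
      finally have "(\<Sum>j<n. sqrt (a j)) \<le> sqrt (real n * 2)"
        by (intro real_le_rsqrt) simp
      also have "sqrt (real n * 2) = real n * sqrt (2 / real n)"
      proof -
        have "sqrt (real n * 2) = sqrt ((real n * real n) * (2 / real n))"
          by (rule arg_cong[where f=sqrt]) (use n0 in \<open>simp add: field_simps\<close>)
        also have "\<dots> = sqrt (real n * real n) * sqrt (2 / real n)" by (rule real_sqrt_mult)
        also have "sqrt (real n * real n) = real n" by simp
        finally show ?thesis .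
      qed
      finally have "(\<Sum>j<n. sqrt (a j)) \<le> real n * sqrt (2 / real n)" .
      then show ?thesis unfolding LHS RHS using c0 by (simp add: mult_left_mono)
    qed
  qed
  show ?thesis using feas main by blast
qed

end
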